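(* Let $R$ be a commutative ring with identity and $M$ a non-zero comultiplication $R$-module with $G'(M)$ non-null and $|\mathrm{Min}(M)|<\infty$. Then (i) no vertex of $G'(M)$ is adjacent to every other vertex; (ii) $G'(M)$ is not a complete graph.
   Context: An $R$-module $M$ is a comultiplication module if for every submodule $N$ of $M$ there is an ideal $I$ of $R$ with $N=\mathrm{Ann}_M(I)$. A submodule $N$ of $M$ is large if $N\cap L\neq 0$ for every non-zero submodule $L$ of $M$. $\mathrm{Min}(M)$ is the set of minimal submodules of $M$. The large sum graph $G'(M)$ has as vertex set the set of all non-zero non-large submodules of $M$, and two distinct vertices $N,K$ are adjacent iff $N+K$ is non-large in $M$. *)

theory Defs
  imports Main "HOL.Modules"
begin

text \<open>The R-module M is the whole carrier type 'b, with scalar multiplication scale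
  satisfying the module axioms (locale module). Submodules: the subspace condition of that locale, written out.\<close>

definition submod :: "('a::comm_ring_1 \<Rightarrow> 'b::ab_group_add \<Rightarrow> 'b) \<Rightarrow> 'b set \<Rightarrow> bool" where
  "submod scale N \<longleftrightarrow> 0 \<in> N \<and> (\<forall>x\<in>N. \<forall>y\<in>N. x + y \<in> N) \<and> (\<forall>c. \<forall>x\<in>N. scale c x \<in> N)"

definition ring_ideal :: "'a::comm_ring_1 set \<Rightarrow> bool" where
  "ring_ideal I \<longleftrightarrow> 0 \<in> I \<and> (\<forall>x\<in>I. \<forall>y\<in>I. x + y \<in> I) \<and> (\<forall>c. \<forall>x\<in>I. c * x \<in> I)"

definition annM :: "('a::comm_ring_1 \<Rightarrow> 'b::ab_group_add \<Rightarrow> 'b) \<Rightarrow> 'a set \<Rightarrow> 'b set" where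
  "annM scale I = {m. \<forall>r\<in>I. scale r m = 0}"

definition comultiplication_module :: "('a::comm_ring_1 \<Rightarrow> 'b::ab_group_add \<Rightarrow> 'b) \<Rightarrow> bool" where
  "comultiplication_module scale \<longleftrightarrow>
     (\<forall>N. submod scale N \<longrightarrow> (\<exists>I. ring_ideal I \<and> N = annM scale I))"

definition large_submod :: "('a::comm_ring_1 \<Rightarrow> 'b::ab_group_add \<Rightarrow> 'b) \<Rightarrow> 'b set \<Rightarrow> bool" where
  "large_submod scale N \<longleftrightarrow> submod scale N \<and>
     (\<forall>L. submod scale L \<and> L \<noteq> {0} \<longrightarrow> N \<inter> L \<noteq> {0})"

definition min_submods :: "('a::comm_ring_1 \<Rightarrow> 'b::ab_group_add \<Rightarrow> 'b) \<Rightarrow> 'b set set" where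
  "min_submods scale = {N. submod scale N \<and> N \<noteq> {0} \<and>
     (\<forall>L. submod scale L \<and> L \<subseteq> N \<and> L \<noteq> {0} \<longrightarrow> L = N)}"

definition set_sum :: "'b::ab_group_add set \<Rightarrow> 'b set \<Rightarrow> 'b set" where
  "set_sum N K = {x + y | x y. x \<in> N \<and> y \<in> K}"

definition lsg_vertices :: "('a::comm_ring_1 \<Rightarrow> 'b::ab_group_add \<Rightarrow> 'b) \<Rightarrow> 'b set set" where
  "lsg_vertices scale = {N. submod scale N \<and> N \<noteq> {0} \<and> \<not> large_submod scale N}"

definition lsg_adj :: "('a::comm_ring_1 \<Rightarrow> 'b::ab_group_add \<Rightarrow> 'b) \<Rightarrow> 'b set \<Rightarrow> 'b set \<Rightarrow> bool" where
  "lsg_adj scale N K \<longleftrightarrow> N \<in> lsg_vertices scale \<and> K \<in> lsg_vertices scale \<and> N \<noteq> K \<and>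
     \<not> large_submod scale (set_sum N K)"

text \<open>A graph is null iff it has no edges.\<close>
definition lsg_nonnull :: "('a::comm_ring_1 \<Rightarrow> 'b::ab_group_add \<Rightarrow> 'b) \<Rightarrow> bool" where
  "lsg_nonnull scale \<longleftrightarrow> (\<exists>N K. lsg_adj scale N K)"

definition lsg_complete :: "('a::comm_ring_1 \<Rightarrow> 'b::ab_group_add \<Rightarrow> 'b) \<Rightarrow> bool" where
  "lsg_complete scale \<longleftrightarrow> (\<forall>N\<in>lsg_vertices scale. \<forall>K\<in>lsg_vertices scale. N \<noteq> K \<longrightarrow> lsg_adj scale N K)"

end

theory Submission
  imports Defs
begin

context module
begin

lemma min_exists:
  assumes comul: "comultiplication_module scale"
    and N: "submod scale N" and x: "x \<in> N" "x \<noteq> 0"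
  shows "\<exists>U\<in>min_submods scale. U \<subseteq> N"
proof -
  define Rx where "Rx = range (\<lambda>r. scale r x)"
  define F where "F = {P. submod scale P \<and> P \<subseteq> Rx \<and> x \<notin> P}"
  have "{0} \<in> F" unfolding F_def Rx_def submod_def using x
    by (auto intro: image_eqI[where x=0])
  then have Fne: "F \<noteq> {}" by blast
  have "\<exists>P\<in>F. \<forall>X\<in>F. P \<subseteq> X \<longrightarrow> X = P"
  proof (rule subset_Zorn_nonempty[OF Fne])
    fix C assume C: "C \<noteq> {}" "subset.chain F C"
    hence CF: "C \<subseteq> F" and ch: "\<forall>X\<in>C. \<forall>Y\<in>C. X \<subseteq> Y \<or> Y \<subseteq> X"
      by (auto simp: subset_chain_def)
    have "submod scale (\<Union>C)"
      unfolding submod_def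
    proof (intro conjI ballI allI)
      show "0 \<in> \<Union>C" using C CF unfolding F_def submod_def by blast
    next
      fix a b assume "a \<in> \<Union>C" "b \<in> \<Union>C"
      then obtain X Y where XY: "X\<in>C" "Y\<in>C" "a\<in>X" "b\<in>Y" by blast
      show "a + b \<in> \<Union>C"
      proof (cases "X \<subseteq> Y")
        case True
        then show ?thesis using XY CF unfolding F_def submod_def by blast
      next
        case False
        then have "Y \<subseteq> X" using ch XY by blast
        then show ?thesis using XY CF unfolding F_def submod_def by blast
      qed
    next
      fix c a assume "a \<in> \<Union>C"
      then show "scale c a \<in> \<Union>C" using CF unfolding F_def submod_def by blast
    qed
    then show "\<Union>C \<in> F" using CF unfolding F_def by blast
  qed
  then obtain P where PF: "P \<in> F" and Pmax: "\<forall>X\<in>F. P \<subseteq> X \<longrightarrow> X = P" by blast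
  have Psub: "submod scale P" and PRx: "P \<subseteq> Rx" and xP: "x \<notin> P"
    using PF unfolding F_def by auto
  define m where "m = {r. scale r x \<in> P}"
  have "\<exists>y\<in>Rx. y \<noteq> 0 \<and> (\<forall>s\<in>m. scale s y = 0)"
  proof (rule ccontr)
    assume H: "\<not> ?thesis"
    obtain I where I: "ring_ideal I" "P = annM scale I" using comul Psub
      unfolding comultiplication_module_def by blast
    have "x \<in> annM scale I"
      unfolding annM_def
    proof (intro CollectI ballI)
      fix r assume r: "r \<in> I"
      have "scale r x \<in> Rx" unfolding Rx_def by blast
      moreover have "\<forall>s\<in>m. scale s (scale r x) = 0"
      proof
        fix s assume "s \<in> m"
        then have "scale s x \<in> annM scale I" using I unfolding m_def by simp
        then have "scale r (scale s x) = 0" using r unfolding annM_def by blast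
        then show "scale s (scale r x) = 0" by (simp add: mult.commute)
      qed
      ultimately show "scale r x = 0" using H by blast
    qed
    then show False using I xP by blast
  qed
  then obtain y where yRx: "y \<in> Rx" and y0: "y \<noteq> 0" and my: "\<forall>s\<in>m. scale s y = 0"
    by blast
  obtain ry where ry: "y = scale ry x" using yRx unfolding Rx_def by blast
  define U where "U = range (\<lambda>t. scale t y)"
  have Usub: "submod scale U" unfolding U_def submod_def
    by (auto simp: scale_left_distrib[symmetric] intro: image_eqI[where x=0] image_eqI[where x="_ + _"] image_eqI[where x="_ * _"])
  have Nsub: "\<And>r c. scale r x \<in> N"
    using N x unfolding submod_def by blast
  have UN: "U \<subseteq> N" unfolding U_def using Nsub ry by auto
  have yU: "y \<in> U" unfolding U_def by (auto intro: image_eqI[where x=1])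
  have "U \<in> min_submods scale"
    unfolding min_submods_def
  proof (intro CollectI conjI allI impI)
    show "submod scale U" by fact
    show "U \<noteq> {0}" using yU y0 by blast
  next
    fix L assume L: "submod scale L \<and> L \<subseteq> U \<and> L \<noteq> {0}"
    then obtain z where zL: "z \<in> L" and z0: "z \<noteq> 0"
      unfolding submod_def by blast
    obtain t where zt: "z = scale t y" using zL L unfolding U_def by blast
    have tm: "t \<notin> m" using my z0 zt by blast
    define P' where "P' = {p + scale u (scale t x) | p u. p \<in> P}"
    have P'sub: "submod scale P'" unfolding submod_def
    proof (intro conjI ballI allI)
      show "0 \<in> P'" unfolding P'_def using Psub unfolding submod_def
        by (auto intro!: exI[where x=0])
    next
      fix a b assume "a \<in> P'" "b \<in> P'"
      then obtain p1 u1 p2 u2 where "a = p1 + scale u1 (scale t x)" "p1 \<in> P"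
        "b = p2 + scale u2 (scale t x)" "p2 \<in> P" unfolding P'_def by blast
      moreover have "p1 + p2 \<in> P" using Psub calculation unfolding submod_def by blast
      ultimately show "a + b \<in> P'" unfolding P'_def
        by (auto intro!: exI[where x="p1+p2"] exI[where x="u1+u2"] simp: algebra_simps)
    next
      fix c a assume "a \<in> P'"
      then obtain p1 u1 where "a = p1 + scale u1 (scale t x)" "p1 \<in> P" unfolding P'_def by blast
      moreover have "scale c p1 \<in> P" using Psub calculation unfolding submod_def by blast
      ultimately show "scale c a \<in> P'" unfolding P'_def
        by (auto intro!: exI[where x="scale c p1"] exI[where x="c*u1"] simp: algebra_simps)
    qed
    have "P \<subseteq> P'"
    proof
      fix a assume "a \<in> P"
      then have "a = a + scale 0 (scale t x) \<and> a \<in> P" by simp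
      then show "a \<in> P'" unfolding P'_def by blast
    qed
    moreover have "scale t x \<in> P'" unfolding P'_def using Psub unfolding submod_def
      by (auto intro!: exI[where x=0] exI[where x=1])
    moreover have "scale t x \<notin> P" using tm unfolding m_def by simp
    ultimately have "P' \<notin> F" using Pmax by blast
    moreover have "P' \<subseteq> Rx"
    proof
      fix a assume "a \<in> P'"
      then obtain p1 u1 where a: "a = p1 + scale u1 (scale t x)" "p1 \<in> P" unfolding P'_def by blast
      then obtain r1 where "p1 = scale r1 x" using PRx unfolding Rx_def by blast
      then have "a = scale (r1 + u1 * t) x" using a by (simp add: algebra_simps)
      then show "a \<in> Rx" unfolding Rx_def by blast
    qed
    ultimately have "x \<in> P'" using P'sub unfolding F_def by blast
    then obtain p u where pu: "x = p + scale u (scale t x)" "p \<in> P" unfolding P'_def by blast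
    have "scale (1 - u * t) x = p" using pu(1) by (simp add: algebra_simps)
    then have "1 - u * t \<in> m" using pu unfolding m_def by simp
    then have "scale (1 - u*t) y = 0" using my by blast
    then have "y = scale u z" using zt by (simp add: algebra_simps)
    then have yL: "y \<in> L" using zL L unfolding submod_def by blast
    show "L = U"
    proof
      show "L \<subseteq> U" using L by blast
      show "U \<subseteq> L" unfolding U_def using yL L unfolding submod_def by blast
    qed
  qed
  then show ?thesis using UN by blast
qed

lemma nz_elem: "submod scale X \<Longrightarrow> X \<noteq> {0} \<Longrightarrow> \<exists>x\<in>X. x \<noteq> 0"
  unfolding submod_def by blast

lemma min_sub: "submod scale N \<Longrightarrow> N \<noteq> {0} \<Longrightarrow> comultiplication_module scale \<Longrightarrow>
   \<exists>U\<in>min_submods scale. U \<subseteq> N"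
  using nz_elem min_exists by blast

lemma prod_notann:
  assumes T: "T \<in> min_submods scale" and F: "finite F"
    and c: "\<forall>f\<in>F. \<exists>t\<in>T. scale (c f) t \<noteq> 0"
  shows "\<exists>t\<in>T. scale (prod c F) t \<noteq> 0"
  using F c
proof (induction F rule: finite_induct)
  case empty
  then show ?case using T nz_elem unfolding min_submods_def by auto
next
  case (insert f F)
  then obtain t where t: "t \<in> T" "scale (prod c F) t \<noteq> 0" by auto
  obtain t1 where t1: "t1 \<in> T" "scale (c f) t1 \<noteq> 0" using insert by auto
  have Tsub: "submod scale T" and Tmin: "\<And>L. submod scale L \<Longrightarrow> L \<subseteq> T \<Longrightarrow> L \<noteq> {0} \<Longrightarrow> L = T"
    using T unfolding min_submods_def by auto
  define X where "X = (\<lambda>v. scale (c f) v) ` T"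
  have "submod scale X" unfolding submod_def
  proof (intro conjI ballI allI)
    show "0 \<in> X" unfolding X_def using Tsub unfolding submod_def by (auto intro!: image_eqI[where x=0])
  next
    fix p q assume "p \<in> X" "q \<in> X"
    then obtain v w where "v \<in> T" "w \<in> T" "p = scale (c f) v" "q = scale (c f) w" unfolding X_def by blast
    moreover have "v + w \<in> T" using Tsub calculation unfolding submod_def by blast
    moreover have "p + q = scale (c f) (v + w)" using calculation by (simp add: scale_right_distrib)
    ultimately show "p + q \<in> X" unfolding X_def by blast
  next
    fix r p assume "p \<in> X"
    then obtain v where "v \<in> T" "p = scale (c f) v" unfolding X_def by blast
    moreover have "scale r v \<in> T" using Tsub calculation unfolding submod_def by blast
    moreover have "scale r p = scale (c f) (scale r v)" using calculation by (simp add: mult.commute)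
    ultimately show "scale r p \<in> X" unfolding X_def by blast
  qed
  moreover have "X \<subseteq> T" unfolding X_def using Tsub unfolding submod_def by auto
  moreover have "X \<noteq> {0}" unfolding X_def using t1 by auto
  ultimately have "X = T" using Tmin by blast
  then obtain v where v: "v \<in> T" "t = scale (c f) v" using t unfolding X_def by blast
  have "scale (prod c (insert f F)) v = scale (prod c F) t"
    using insert v by (simp add: mult.commute)
  then have "scale (prod c (insert f F)) v \<noteq> 0" using v t by simp
  then show ?case using v(1) by blast
qed

lemma ann_distinct:
  assumes comul: "comultiplication_module scale"
    and T: "T \<in> min_submods scale" and T': "T' \<in> min_submods scale" and ne: "T \<noteq> T'"
  shows "\<exists>a. (\<forall>t\<in>T'. scale a t = 0) \<and> (\<exists>t\<in>T. scale a t \<noteq> 0)"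
proof (rule ccontr)
  assume H: "\<not> ?thesis"
  have T'sub: "submod scale T'" and T'min: "\<And>L. submod scale L \<Longrightarrow> L \<subseteq> T' \<Longrightarrow> L \<noteq> {0} \<Longrightarrow> L = T'"
    using T' unfolding min_submods_def by auto
  have Tsub: "submod scale T" and T0: "T \<noteq> {0}"
    using T unfolding min_submods_def by auto
  obtain I' where I': "T' = annM scale I'"
    using comul T'sub unfolding comultiplication_module_def by blast
  have HH: "\<And>a. \<forall>t\<in>T'. scale a t = 0 \<Longrightarrow> \<forall>t\<in>T. scale a t = 0" using H by blast
  have "T \<subseteq> annM scale I'"
  proof
    fix v assume v: "v \<in> T"
    have "\<forall>r\<in>I'. scale r v = 0"
    proof
      fix r assume r: "r \<in> I'"
      have "\<forall>t\<in>T'. scale r t = 0" using I' r unfolding annM_def by blast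
      then show "scale r v = 0" using HH v by blast
    qed
    then show "v \<in> annM scale I'" unfolding annM_def by blast
  qed
  then have "T \<subseteq> T'" using I' by simp
  then have "T = T'" using T'min Tsub T0 by blast
  then show False using ne by simp
qed

lemma set_sum_submod: "submod scale N \<Longrightarrow> submod scale K \<Longrightarrow> submod scale (set_sum N K)"
  unfolding submod_def set_sum_def
proof (intro conjI ballI allI; elim conjE)
  assume "0 \<in> N" "0 \<in> K"
  then show "0 \<in> {x + y |x y. x \<in> N \<and> y \<in> K}" by force
next
  fix a b assume N: "\<forall>x\<in>N. \<forall>y\<in>N. x + y \<in> N" and K: "\<forall>x\<in>K. \<forall>y\<in>K. x + y \<in> K"
    and a: "a \<in> {x + y |x y. x \<in> N \<and> y \<in> K}" and b: "b \<in> {x + y |x y. x \<in> N \<and> y \<in> K}"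
  from a b obtain x1 y1 x2 y2 where "a = x1 + y1" "b = x2 + y2" "x1 \<in> N" "x2 \<in> N" "y1 \<in> K" "y2 \<in> K" by blast
  moreover have "a + b = (x1 + x2) + (y1 + y2)" using calculation by (simp add: algebra_simps)
  ultimately show "a + b \<in> {x + y |x y. x \<in> N \<and> y \<in> K}" using N K by blast
next
  fix c a assume N: "\<forall>c. \<forall>x\<in>N. c *s x \<in> N" and K: "\<forall>c. \<forall>x\<in>K. c *s x \<in> K"
    and a: "a \<in> {x + y |x y. x \<in> N \<and> y \<in> K}"
  from a obtain x1 y1 where "a = x1 + y1" "x1 \<in> N" "y1 \<in> K" by blast
  moreover have "scale c a = scale c x1 + scale c y1" using calculation by (simp add: algebra_simps)
  ultimately show "c *s a \<in> {x + y |x y. x \<in> N \<and> y \<in> K}" using N K by blast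
qed

lemma no_universal:
  assumes comul: "comultiplication_module scale" and fin: "finite (min_submods scale)"
    and N: "N \<in> lsg_vertices scale"
  shows "\<exists>K\<in>lsg_vertices scale. K \<noteq> N \<and> \<not> lsg_adj scale N K"
proof -
  have Nsub: "submod scale N" and N0: "N \<noteq> {0}" and Nnl: "\<not> large_submod scale N"
    using N unfolding lsg_vertices_def by auto
  obtain L where L: "submod scale L" "L \<noteq> {0}" "N \<inter> L = {0}"
    using Nnl Nsub unfolding large_submod_def by blast
  obtain S where S: "S \<in> min_submods scale" "S \<subseteq> L" using min_sub L comul by blast
  obtain T where T: "T \<in> min_submods scale" "T \<subseteq> N" using min_sub Nsub N0 comul by blast
  have S0: "S \<noteq> {0}" and T0: "T \<noteq> {0}" and Ssub: "submod scale S" and Tsub: "submod scale T"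
    using S T unfolding min_submods_def by auto
  have "S \<noteq> T"
  proof
    assume "S = T"
    then have "S \<subseteq> {0}" using S T L by blast
    then show False using S0 Ssub unfolding submod_def by blast
  qed
  define Mn where "Mn = min_submods scale - {T}"
  have "\<forall>U\<in>Mn. \<exists>a. (\<forall>t\<in>U. scale a t = 0) \<and> (\<exists>t\<in>T. scale a t \<noteq> 0)"
    unfolding Mn_def using ann_distinct[OF comul T(1)] by blast
  then have "\<exists>c. \<forall>U\<in>Mn. (\<forall>t\<in>U. scale (c U) t = 0) \<and> (\<exists>t\<in>T. scale (c U) t \<noteq> 0)"
    by (rule bchoice)
  then obtain c where c: "\<forall>U\<in>Mn. (\<forall>t\<in>U. scale (c U) t = 0) \<and> (\<exists>t\<in>T. scale (c U) t \<noteq> 0)"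
    by blast
  define a where "a = prod c Mn"
  define K where "K = {v. scale a v = 0}"
  have finMn: "finite Mn" using fin unfolding Mn_def by simp
  have UK: "U \<subseteq> K" if U: "U \<in> min_submods scale" "U \<noteq> T" for U
  proof
    fix u assume u: "u \<in> U"
    have UM: "U \<in> Mn" using U unfolding Mn_def by simp
    have "a = c U * prod c (Mn - {U})" unfolding a_def using prod.remove[OF finMn UM] .
    then have "scale a u = scale (prod c (Mn - {U})) (scale (c U) u)" by (simp add: mult.commute)
    also have "\<dots> = 0" using c UM u by simp
    finally show "u \<in> K" unfolding K_def by simp
  qed
  obtain t where t: "t \<in> T" "scale a t \<noteq> 0"
    using prod_notann[OF T(1) finMn] c unfolding a_def by blast
  have Ksub: "submod scale K" unfolding K_def submod_def
    by (auto simp: scale_right_distrib) (metis mult.commute scale_scale scale_zero_right)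
  have "S \<subseteq> K" using UK S \<open>S \<noteq> T\<close> by blast
  then have K0: "K \<noteq> {0}" using S0 Ssub unfolding submod_def by blast
  have KT: "K \<inter> T = {0}"
  proof (rule ccontr)
    assume "K \<inter> T \<noteq> {0}"
    moreover have "submod scale (K \<inter> T)" using Ksub Tsub unfolding submod_def by blast
    ultimately have "K \<inter> T = T" using T unfolding min_submods_def by blast
    then show False using t unfolding K_def by blast
  qed
  have Knl: "\<not> large_submod scale K" unfolding large_submod_def using KT Tsub T0 by blast
  have KV: "K \<in> lsg_vertices scale" unfolding lsg_vertices_def using Ksub K0 Knl by blast
  have KN: "K \<noteq> N" using t T unfolding K_def by blast
  have large: "large_submod scale (set_sum N K)"
    unfolding large_submod_def
  proof (intro conjI allI impI)
    show "submod scale (set_sum N K)" using set_sum_submod Nsub Ksub by blast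
  next
    fix L' assume L': "submod scale L' \<and> L' \<noteq> {0}"
    then obtain U where U: "U \<in> min_submods scale" "U \<subseteq> L'" using min_sub comul by blast
    have "U \<subseteq> N \<union> K"
    proof (cases "U = T")
      case True
      then show ?thesis using T by blast
    next
      case False
      then show ?thesis using UK[OF U(1)] by blast
    qed
    moreover have "N \<subseteq> set_sum N K" unfolding set_sum_def
    proof
      fix v assume "v \<in> N" then have "v = v + 0 \<and> v \<in> N \<and> 0 \<in> K" using Ksub unfolding submod_def by simp
      then show "v \<in> {x + y |x y. x \<in> N \<and> y \<in> K}" by blast
    qed
    moreover have "K \<subseteq> set_sum N K" unfolding set_sum_def
    proof
      fix v assume "v \<in> K" then have "v = 0 + v \<and> 0 \<in> N \<and> v \<in> K" using Nsub unfolding submod_def by simp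
      then show "v \<in> {x + y |x y. x \<in> N \<and> y \<in> K}" by blast
    qed
    moreover have "submod scale U" "U \<noteq> {0}" using U(1) unfolding min_submods_def by auto
    moreover obtain u where "u \<in> U" "u \<noteq> 0" using nz_elem calculation(4,5) by blast
    ultimately have "u \<in> set_sum N K \<inter> L'" using U by blast
    then show "set_sum N K \<inter> L' \<noteq> {0}" using \<open>u \<noteq> 0\<close> by blast
  qed
  have "\<not> lsg_adj scale N K" using large unfolding lsg_adj_def by simp
  then show ?thesis using KV KN by blast
qed

end

theorem proposition2p11:
  fixes scale :: "'a::comm_ring_1 \<Rightarrow> 'b::ab_group_add \<Rightarrow> 'b"
  assumes "module scale"
    and "\<exists>x::'b. x \<noteq> 0"
    and "comultiplication_module scale"
    and "lsg_nonnull scale"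
    and "finite (min_submods scale)"
  shows "(\<not> (\<exists>N\<in>lsg_vertices scale. \<forall>K\<in>lsg_vertices scale. K \<noteq> N \<longrightarrow> lsg_adj scale N K))
         \<and> \<not> lsg_complete scale"
proof -
  interpret module scale by fact
  have "\<not> (\<exists>N\<in>lsg_vertices scale. \<forall>K\<in>lsg_vertices scale. K \<noteq> N \<longrightarrow> lsg_adj scale N K)"
  proof
    assume "\<exists>N\<in>lsg_vertices scale. \<forall>K\<in>lsg_vertices scale. K \<noteq> N \<longrightarrow> lsg_adj scale N K"
    then obtain N where N: "N \<in> lsg_vertices scale" and H: "\<forall>K\<in>lsg_vertices scale. K \<noteq> N \<longrightarrow> lsg_adj scale N K" by blast
    obtain K where "K \<in> lsg_vertices scale" "K \<noteq> N" "\<not> lsg_adj scale N K"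
      using no_universal[OF assms(3,5) N] by blast
    then show False using H by blast
  qed
  moreover have "\<not> lsg_complete scale"
  proof
    assume c: "lsg_complete scale"
    obtain N K where "lsg_adj scale N K" using assms(4) unfolding lsg_nonnull_def by blast
    then have "N \<in> lsg_vertices scale" unfolding lsg_adj_def by blast
    then have "\<forall>K\<in>lsg_vertices scale. K \<noteq> N \<longrightarrow> lsg_adj scale N K" using c unfolding lsg_complete_def by blast
    then show False using \<open>N \<in> lsg_vertices scale\<close> calculation by blast
  qed
  ultimately show ?thesis by blast
qed

end
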